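(* Let $(\mathcal{S},\mathcal{R})$ be a complete positive presentation satisfying the following two conditions: (C) $\mathcal{R}$ contains no relation of the form $su=sv$ or $us=vs$ with $s\in\mathcal{S}$, $u,v\in\mathcal{S}^*$ and $u\neq v$; (E$_r$) there exists a set $\mathcal{S}'$ with $\mathcal{S}\subseteq\mathcal{S}'\subseteq\mathcal{S}^*$ such that for all $u,v\in\mathcal{S}'$ there exist $u',v'\in\mathcal{S}'$ satisfying $(uv')^{-1}(vu')\curvearrowright_r\varepsilon$. Then the monoid $\mathrm{Mon}(\mathcal{S};\mathcal{R})$ embeds in a group of fractions.
   Context: A positive presentation is a pair $(\mathcal{S},\mathcal{R})$ where $\mathcal{S}$ is a nonempty set of letters and $\mathcal{R}$ is a family of relations $u=v$, i.e. unordered pairs $\{u,v\}$ of nonempty words in the free monoid $\mathcal{S}^*$ (letters are regarded as length-one words). $\varepsilon$ denotes the empty word; $\equiv$ is the smallest congruence on $\mathcal{S}^*$ containing all pairs of $\mathcal{R}$, and $\mathrm{Mon}(\mathcal{S};\mathcal{R})=\mathcal{S}^*/{\equiv}$. Let $\mathcal{S}^{-1}=\{s^{-1}:s\in\mathcal{S}\}$ be a disjoint copy of $\mathcal{S}$; for $u\in\mathcal{S}^*$, $u^{-1}$ is obtained by reversing the order of the letters of $u$ and replacing each $s$ by $s^{-1}$. Right reversing: $\mathbf{w}\curvearrowright_r\mathbf{w}'$ (words on $\mathcal{S}\cup\mathcal{S}^{-1}$) if $\mathbf{w}'$ is obtained from $\mathbf{w}$ by finitely many steps, each deleting a subword $u^{-1}u$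 ($u\in\mathcal{S}^*$ nonempty) or replacing a subword $u^{-1}v$ ($u,v\in\mathcal{S}^*$ nonempty) by $v'u'^{-1}$ where $uv'=vu'$ is a relation of $\mathcal{R}$. Left reversing: $\mathbf{w}\curvearrowright_l\mathbf{w}'$ if $\mathbf{w}'$ is obtained by finitely many steps, each deleting a subword $uu^{-1}$ ($u$ nonempty) or replacing a subword $uv^{-1}$ ($u,v$ nonempty) by $v'^{-1}u'$ where $v'u=u'v$ is a relation of $\mathcal{R}$. $(\mathcal{S},\mathcal{R})$ is $r$-complete if for all $u,v,u',v'\in\mathcal{S}^*$ with $uv'\equiv vu'$ there exist $u'',v'',w\in\mathcal{S}^*$ with $u^{-1}v\curvearrowright_r v''u''^{-1}$, $u'\equiv u''w$, $v'\equiv v''w$; it is $l$-complete if for all $u,v,u',v'$ with $v'u\equiv u'v$ there exist $u'',v'',w$ with $uv^{-1}\curvearrowright_l v''^{-1}u''$, $u'\equiv wu''$, $v'\equiv wv''$; it is complete if it is both. A monoid $M$ embeds in a group of fractions if there is a group $G$ containing (an isomorphic copy of) $M$ as a submonoid such that every element of $G$ has the form $xy^{-1}$ with $x,y\in M$. *)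

theory Defs
  imports "HOL-Algebra.Group"
begin

text \<open>Signed letters: (s, True) stands for s,
(s, False) stands for s^{-1}. A family of relations R is a set of pairs (u,v);
a relation u = v is regarded as unordered, i.e. both (u,v) and (v,u) encode it.\<close>

definition pos :: "'a list \<Rightarrow> ('a \<times> bool) list" where
  "pos u = map (\<lambda>s. (s, True)) u"

definition winv :: "'a list \<Rightarrow> ('a \<times> bool) list" where
  "winv u = rev (map (\<lambda>s. (s, False)) u)"

definition is_rel :: "('a list \<times> 'a list) set \<Rightarrow> 'a list \<Rightarrow> 'a list \<Rightarrow> bool" where
  "is_rel R x y \<longleftrightarrow> (x, y) \<in> R \<or> (y, x) \<in> R"

definition positive_presentation :: "'a set \<Rightarrow> ('a list \<times> 'a list) set \<Rightarrow> bool" where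
  "positive_presentation S R \<longleftrightarrow> S \<noteq> {} \<and>
     (\<forall>(u, v) \<in> R. u \<in> lists S \<and> v \<in> lists S \<and> u \<noteq> [] \<and> v \<noteq> [])"

definition rstep :: "('a list \<times> 'a list) set \<Rightarrow> 'a list \<Rightarrow> 'a list \<Rightarrow> bool" where
  "rstep R x y \<longleftrightarrow> (\<exists>a b u v. is_rel R u v \<and> x = a @ u @ b \<and> y = a @ v @ b)"

definition pequiv :: "('a list \<times> 'a list) set \<Rightarrow> 'a list \<Rightarrow> 'a list \<Rightarrow> bool" where
  "pequiv R = (rstep R)\<^sup>*\<^sup>*"

definition rrev_step :: "'a set \<Rightarrow> ('a list \<times> 'a list) set \<Rightarrow>
    ('a \<times> bool) list \<Rightarrow> ('a \<times> bool) list \<Rightarrow> bool" where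
  "rrev_step S R w w' \<longleftrightarrow>
     (\<exists>w1 w2 u. u \<in> lists S \<and> u \<noteq> [] \<and> w = w1 @ winv u @ pos u @ w2 \<and> w' = w1 @ w2) \<or>
     (\<exists>w1 w2 u v u' v'. u \<in> lists S \<and> v \<in> lists S \<and> u' \<in> lists S \<and> v' \<in> lists S \<and>
        u \<noteq> [] \<and> v \<noteq> [] \<and> is_rel R (u @ v') (v @ u') \<and>
        w = w1 @ winv u @ pos v @ w2 \<and> w' = w1 @ pos v' @ winv u' @ w2)"

definition rrev :: "'a set \<Rightarrow> ('a list \<times> 'a list) set \<Rightarrow>
    ('a \<times> bool) list \<Rightarrow> ('a \<times> bool) list \<Rightarrow> bool" where
  "rrev S R = (rrev_step S R)\<^sup>*\<^sup>*"

definition lrev_step :: "'a set \<Rightarrow> ('a list \<times> 'a list) set \<Rightarrow>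
    ('a \<times> bool) list \<Rightarrow> ('a \<times> bool) list \<Rightarrow> bool" where
  "lrev_step S R w w' \<longleftrightarrow>
     (\<exists>w1 w2 u. u \<in> lists S \<and> u \<noteq> [] \<and> w = w1 @ pos u @ winv u @ w2 \<and> w' = w1 @ w2) \<or>
     (\<exists>w1 w2 u v u' v'. u \<in> lists S \<and> v \<in> lists S \<and> u' \<in> lists S \<and> v' \<in> lists S \<and>
        u \<noteq> [] \<and> v \<noteq> [] \<and> is_rel R (v' @ u) (u' @ v) \<and>
        w = w1 @ pos u @ winv v @ w2 \<and> w' = w1 @ winv v' @ pos u' @ w2)"

definition lrev :: "'a set \<Rightarrow> ('a list \<times> 'a list) set \<Rightarrow>
    ('a \<times> bool) list \<Rightarrow> ('a \<times> bool) list \<Rightarrow> bool" where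
  "lrev S R = (lrev_step S R)\<^sup>*\<^sup>*"

definition r_complete :: "'a set \<Rightarrow> ('a list \<times> 'a list) set \<Rightarrow> bool" where
  "r_complete S R \<longleftrightarrow>
    (\<forall>u \<in> lists S. \<forall>v \<in> lists S. \<forall>u' \<in> lists S. \<forall>v' \<in> lists S.
       pequiv R (u @ v') (v @ u') \<longrightarrow>
       (\<exists>u'' \<in> lists S. \<exists>v'' \<in> lists S. \<exists>w \<in> lists S.
          rrev S R (winv u @ pos v) (pos v'' @ winv u'') \<and>
          pequiv R u' (u'' @ w) \<and> pequiv R v' (v'' @ w)))"

definition l_complete :: "'a set \<Rightarrow> ('a list \<times> 'a list) set \<Rightarrow> bool" where
  "l_complete S R \<longleftrightarrow>
    (\<forall>u \<in> lists S. \<forall>v \<in> lists S. \<forall>u' \<in> lists S. \<forall>v' \<in> lists S.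
       pequiv R (v' @ u) (u' @ v) \<longrightarrow>
       (\<exists>u'' \<in> lists S. \<exists>v'' \<in> lists S. \<exists>w \<in> lists S.
          lrev S R (pos u @ winv v) (winv v'' @ pos u'') \<and>
          pequiv R u' (w @ u'') \<and> pequiv R v' (w @ v'')))"

definition complete :: "'a set \<Rightarrow> ('a list \<times> 'a list) set \<Rightarrow> bool" where
  "complete S R \<longleftrightarrow> r_complete S R \<and> l_complete S R"

definition condC :: "'a set \<Rightarrow> ('a list \<times> 'a list) set \<Rightarrow> bool" where
  "condC S R \<longleftrightarrow> (\<forall>x y. is_rel R x y \<longrightarrow>
     \<not> (\<exists>s u v. s \<in> S \<and> u \<in> lists S \<and> v \<in> lists S \<and> u \<noteq> v \<and>
          ((x = s # u \<and> y = s # v) \<or> (x = u @ [s] \<and> y = v @ [s]))))"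

definition condEr :: "'a set \<Rightarrow> ('a list \<times> 'a list) set \<Rightarrow> bool" where
  "condEr S R \<longleftrightarrow> (\<exists>S'. (\<lambda>s. [s]) ` S \<subseteq> S' \<and> S' \<subseteq> lists S \<and>
     (\<forall>u \<in> S'. \<forall>v \<in> S'. \<exists>u' \<in> S'. \<exists>v' \<in> S'.
        rrev S R (winv (u @ v') @ pos (v @ u')) []))"

text \<open>Mon(S;R) embeds in a group of fractions: there is a group G and a monoid
homomorphism from S^* to G whose kernel congruence is exactly \<equiv> (so it induces an
injective monoid homomorphism Mon(S;R) \<rightarrow> G), such that every element of G is
of the form x y^{-1} with x, y in the image. The carrier type of G is fixed to
('a list \<times> 'a list) set, which is large enough to hold a copy of any group of
fractions of Mon(S;R) (such a group is an image of S^* \<times> S^*).\<close>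
definition embeds_in_group_of_fractions :: "'a set \<Rightarrow> ('a list \<times> 'a list) set \<Rightarrow> bool" where
  "embeds_in_group_of_fractions S R \<longleftrightarrow>
    (\<exists>(G :: ('a list \<times> 'a list) set monoid) f. group G \<and>
       (\<forall>u \<in> lists S. f u \<in> carrier G) \<and>
       f [] = \<one>\<^bsub>G\<^esub> \<and>
       (\<forall>u \<in> lists S. \<forall>v \<in> lists S. f (u @ v) = f u \<otimes>\<^bsub>G\<^esub> f v) \<and>
       (\<forall>u \<in> lists S. \<forall>v \<in> lists S. f u = f v \<longleftrightarrow> pequiv R u v) \<and>
       (\<forall>g \<in> carrier G. \<exists>x \<in> lists S. \<exists>y \<in> lists S. g = f x \<otimes>\<^bsub>G\<^esub> inv\<^bsub>G\<^esub> (f y)))"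

end

theory Submission
  imports Defs "HOL-Algebra.Bij"
begin


lemma is_rel_sym: "is_rel R x y \<Longrightarrow> is_rel R y x"
  by (auto simp: is_rel_def)

lemma rstep_sym: "rstep R x y \<Longrightarrow> rstep R y x"
  unfolding rstep_def by (blast dest: is_rel_sym)

lemma pequiv_refl[simp]: "pequiv R x x"
  by (simp add: pequiv_def)

lemma pequiv_sym: "pequiv R x y \<Longrightarrow> pequiv R y x"
  unfolding pequiv_def
proof (induction rule: rtranclp_induct)
  case base then show ?case by simp
next
  case (step y z) then show ?case
    by (meson converse_rtranclp_into_rtranclp rstep_sym)
qed

lemma pequiv_trans: "pequiv R x y \<Longrightarrow> pequiv R y z \<Longrightarrow> pequiv R x z"
  unfolding pequiv_def by simp

lemma rstep_cong: "rstep R x y \<Longrightarrow> rstep R (c@x@d) (c@y@d)"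
  unfolding rstep_def
proof (elim exE conjE)
  fix a b u v assume "is_rel R u v" "x = a @ u @ b" "y = a @ v @ b"
  then show "\<exists>a b u v. is_rel R u v \<and> c @ x @ d = a @ u @ b \<and> c @ y @ d = a @ v @ b"
    by (rule_tac x="c@a" in exI, rule_tac x="b@d" in exI) auto
qed

lemma pequiv_cong: "pequiv R x y \<Longrightarrow> pequiv R (c@x@d) (c@y@d)"
  unfolding pequiv_def
proof (induction rule: rtranclp_induct)
  case base then show ?case by simp
next
  case (step y z) then show ?case
    by (meson rtranclp.rtrancl_into_rtrancl rstep_cong)
qed

lemma pequiv_app_l: "pequiv R x y \<Longrightarrow> pequiv R (c@x) (c@y)"
  using pequiv_cong[of R x y c "[]"] by simp

lemma pequiv_app_r: "pequiv R x y \<Longrightarrow> pequiv R (x@d) (y@d)"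
  using pequiv_cong[of R x y "[]" d] by simp

lemma pequiv_rel: "is_rel R x y \<Longrightarrow> pequiv R x y"
  unfolding pequiv_def rstep_def
  by (rule r_into_rtranclp) (rule exI[of _ "[]"], rule exI[of _ "[]"], auto)

lemma pequiv_lists: "pequiv R x y \<Longrightarrow> positive_presentation S R \<Longrightarrow> x \<in> lists S \<Longrightarrow> y \<in> lists S"
  unfolding pequiv_def
proof (induction rule: rtranclp_induct)
  case base then show ?case by simp
next
  case (step y z) then show ?case
    unfolding rstep_def positive_presentation_def is_rel_def by fastforce
qed

subsection \<open>Path semantics and soundness of right reversing\<close>

fun pth :: "('a list \<times> 'a list) set \<Rightarrow> ('a \<times> bool) list \<Rightarrow> 'a list \<Rightarrow> 'a list \<Rightarrow> bool" where
  "pth R [] m n = pequiv R m n"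
| "pth R ((s, True) # w) m n = pth R w (m @ [s]) n"
| "pth R ((s, False) # w) m n = (\<exists>m'. pequiv R (m' @ [s]) m \<and> pth R w m' n)"

lemma pth_start: "pequiv R m m2 \<Longrightarrow> pth R w m n \<Longrightarrow> pth R w m2 n"
proof (induction R w m n arbitrary: m2 rule: pth.induct)
  case (1 R m n) then show ?case by (meson pequiv_sym pequiv_trans pth.simps(1))
next
  case (2 R s w m n) then show ?case by (simp add: pequiv_app_r)
next
  case (3 R s w m n) then show ?case by (meson pequiv_trans pth.simps(3))
qed

lemma pth_append: "pth R (w1 @ w2) m n \<longleftrightarrow> (\<exists>k. pth R w1 m k \<and> pth R w2 k n)"
proof (induction R w1 m n rule: pth.induct)
  case (1 R m n) then show ?case
    by (auto intro: pth_start pequiv_sym) (meson pequiv_refl)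
next
  case (2 R s w m n) then show ?case by simp
next
  case (3 R s w m n) then show ?case by auto
qed

lemma pth_pos: "pth R (pos c) m n \<longleftrightarrow> pequiv R (m @ c) n"
  by (induction c arbitrary: m) (auto simp: pos_def)

lemma winv_snoc: "winv (d @ [s]) = (s, False) # winv d"
  by (simp add: winv_def)

lemma winv_Cons: "winv (s # d) = winv d @ [(s, False)]"
  by (simp add: winv_def)

lemma pth_winv: "pth R (winv d) m n \<longleftrightarrow> pequiv R (n @ d) m"
proof (induction d arbitrary: m rule: rev_induct)
  case Nil then show ?case by (auto simp: winv_def intro: pequiv_sym)
next
  case (snoc s d) then show ?case
    by (simp add: winv_snoc) (metis append_assoc pequiv_app_r pequiv_refl pequiv_trans)
qed

lemma pth_step: "rrev_step S R w w' \<Longrightarrow> pth R w m n \<Longrightarrow> pth R w' m n"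
  unfolding rrev_step_def
proof (elim disjE exE conjE)
  fix w1 w2 u assume "w = w1 @ winv u @ pos u @ w2" "w' = w1 @ w2" "pth R w m n"
  then obtain k1 k2 k3 where "pth R w1 m k1" "pequiv R (k2 @ u) k1" "pequiv R (k2 @ u) k3" "pth R w2 k3 n"
    by (auto simp: pth_append pth_winv pth_pos)
  then show "pth R w' m n"
    using \<open>w' = w1 @ w2\<close> pth_append pth_start
    by (metis pequiv_sym pequiv_trans)
next
  fix w1 w2 u v u' v'
  assume "is_rel R (u @ v') (v @ u')" "w = w1 @ winv u @ pos v @ w2" "w' = w1 @ pos v' @ winv u' @ w2" "pth R w m n"
  then obtain k1 k2 k3 where a: "pth R w1 m k1" "pequiv R (k2 @ u) k1" "pequiv R (k2 @ v) k3" "pth R w2 k3 n"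
    by (auto simp: pth_append pth_winv pth_pos)
  have "pequiv R (k3 @ u') (k1 @ v')"
  proof -
    have "pequiv R (k3 @ u') (k2 @ v @ u')" using a(3) by (metis append_assoc pequiv_app_r pequiv_sym)
    moreover have "pequiv R (k2 @ v @ u') (k2 @ u @ v')"
      using pequiv_rel[OF is_rel_sym[OF \<open>is_rel R (u @ v') (v @ u')\<close>]] by (rule pequiv_app_l)
    moreover have "pequiv R (k2 @ u @ v') (k1 @ v')" using a(2) by (metis append_assoc pequiv_app_r)
    ultimately show ?thesis by (meson pequiv_trans)
  qed
  then show "pth R w' m n" using a \<open>w' = _\<close>
  proof -
    have "pth R (pos v' @ winv u' @ w2) k1 n"
      unfolding pth_append pth_winv pth_pos
      using \<open>pequiv R (k3 @ u') (k1 @ v')\<close> a(4) by (meson pequiv_refl)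
    then show ?thesis using a(1) \<open>w' = _\<close> pth_append by metis
  qed
qed

lemma pth_rrev: "rrev S R w w' \<Longrightarrow> pth R w m n \<Longrightarrow> pth R w' m n"
  unfolding rrev_def
  by (induction rule: rtranclp_induct) (auto intro: pth_step)

lemma rrev_sound_empty:
  assumes "rrev S R (winv (u @ v') @ pos (v @ u')) []"
  shows "pequiv R (u @ v') (v @ u')"
proof -
  have "pth R (winv (u @ v') @ pos (v @ u')) (u @ v') (v @ u')"
    by (auto simp: pth_append pth_winv pth_pos intro!: exI[of _ "[]"])
  from pth_rrev[OF assms this] show ?thesis by simp
qed



lemma pos_Cons[simp]: "pos (s # c) = (s, True) # pos c" by (simp add: pos_def)
lemma pos_Nil[simp]: "pos [] = []" by (simp add: pos_def)
lemma winv_Nil[simp]: "winv [] = []" by (simp add: winv_def)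
lemma length_pos[simp]: "length (pos c) = length c" by (simp add: pos_def)
lemma length_winv[simp]: "length (winv c) = length c" by (simp add: winv_def)
lemma set_pos: "z \<in> set (pos c) \<Longrightarrow> snd z" by (auto simp: pos_def)
lemma set_winv: "z \<in> set (winv c) \<Longrightarrow> \<not> snd z" by (auto simp: winv_def)
lemma pos_append: "pos (a @ b) = pos a @ pos b" by (simp add: pos_def)

lemma map_fst_pos: "map fst (pos a) = a" by (simp add: pos_def comp_def)
lemma map_fst_winv: "rev (map fst (winv a)) = a" by (simp add: winv_def comp_def rev_map)

lemma noFT: "\<forall>z\<in>set l1. snd z \<Longrightarrow> \<forall>z\<in>set l2. \<not> snd z \<Longrightarrow> l1 @ l2 \<noteq> w1 @ (x, False) # (y, True) # w2"
proof (induction l1 arbitrary: w1)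
  case Nil then show ?case by auto
next
  case (Cons a l1) then show ?case by (cases w1) auto
qed

lemma noTF: "\<forall>z\<in>set l1. \<not> snd z \<Longrightarrow> \<forall>z\<in>set l2. snd z \<Longrightarrow> l1 @ l2 \<noteq> w1 @ (x, True) # (y, False) # w2"
proof (induction l1 arbitrary: w1)
  case Nil then show ?case by auto
next
  case (Cons a l1) then show ?case by (cases w1) auto
qed

lemma pos_winv_inj: "pos a @ winv b = pos c @ winv d \<Longrightarrow> a = c \<and> b = d"
proof -
  assume h: "pos a @ winv b = pos c @ winv d"
  have tw: "takeWhile snd (pos x @ winv y) = pos x" for x y
  proof -
    have "takeWhile snd (pos x @ winv y) = pos x @ takeWhile snd (winv y)"
      by (rule takeWhile_append2) (auto dest: set_pos)
    moreover have "takeWhile snd (winv y) = []"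
      by (cases y rule: rev_cases) (auto simp: winv_snoc)
    ultimately show ?thesis by simp
  qed
  have "pos a = pos c" using tw[of a b] tw[of c d] h by simp
  then have ac: "a = c" using map_fst_pos by metis
  then have "winv b = winv d" using h by simp
  then have "b = d" using map_fst_winv by metis
  with ac show ?thesis by simp
qed

lemma winv_pos_inj: "winv a @ pos b = winv c @ pos d \<Longrightarrow> a = c \<and> b = d"
proof -
  assume h: "winv a @ pos b = winv c @ pos d"
  have tw: "takeWhile (\<lambda>z. \<not> snd z) (winv x @ pos y) = winv x" for x y
  proof -
    have "takeWhile (\<lambda>z. \<not> snd z) (winv x @ pos y) = winv x @ takeWhile (\<lambda>z. \<not> snd z) (pos y)"
      by (rule takeWhile_append2) (auto dest: set_winv)
    moreover have "takeWhile (\<lambda>z. \<not> snd z) (pos y) = []"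
      by (cases y) auto
    ultimately show ?thesis by simp
  qed
  have "winv a = winv c" using tw[of a b] tw[of c d] h by simp
  then have ac: "a = c" using map_fst_winv by metis
  then have "pos b = pos d" using h by simp
  then have "b = d" using map_fst_pos by metis
  with ac show ?thesis by simp
qed

lemma rrev_step_FT: "rrev_step S R w w' \<Longrightarrow> \<exists>w1 w2 x y. w = w1 @ (x, False) # (y, True) # w2"
  unfolding rrev_step_def
proof (elim disjE exE conjE)
  fix w1 w2 u assume "u \<noteq> []" "w = w1 @ winv u @ pos u @ w2"
  then show ?thesis
  proof (cases u)
    case (Cons a l) then show ?thesis using \<open>w = _\<close>
      by (intro exI[of _ "w1 @ winv l"] exI[of _ "pos l @ w2"] exI[of _ a]) (simp add: winv_Cons)
  qed simp
next
  fix w1 w2 u v u' v' assume "u \<noteq> []" "v \<noteq> []" "w = w1 @ winv u @ pos v @ w2"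
  then show ?thesis
  proof (cases u)
    case (Cons a l) then show ?thesis using \<open>w = _\<close> \<open>v \<noteq> []\<close>
      by (cases v) (intro exI[of _ "w1 @ winv l"] exI[of _ "pos (tl v) @ w2"] exI[of _ a] exI[of _ "hd v"]; simp add: winv_Cons)+
  qed simp
qed

lemma pos_snoc: "pos (d @ [s]) = pos d @ [(s, True)]" by (simp add: pos_def)

lemma lrev_step_TF: "lrev_step S R w w' \<Longrightarrow> \<exists>w1 w2 x y. w = w1 @ (x, True) # (y, False) # w2"
  unfolding lrev_step_def
proof (elim disjE exE conjE)
  fix w1 w2 u assume "u \<noteq> []" "w = w1 @ pos u @ winv u @ w2"
  then show ?thesis
  proof (cases u rule: rev_cases)
    case (snoc l a) then show ?thesis using \<open>w = _\<close>
      by (intro exI[of _ "w1 @ pos l"] exI[of _ "winv l @ w2"] exI[of _ a]) (simp add: winv_snoc pos_snoc)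
  qed simp
next
  fix w1 w2 u v u' v' assume "u \<noteq> []" "v \<noteq> []" "w = w1 @ pos u @ winv v @ w2"
  then show ?thesis
  proof (cases u rule: rev_cases)
    case (snoc l a) then show ?thesis using \<open>w = _\<close> \<open>v \<noteq> []\<close>
      by (cases v rule: rev_cases) (intro exI[of _ "w1 @ pos l"] exI[of _ "winv (butlast v) @ w2"] exI[of _ a] exI[of _ "last v"]; simp add: winv_snoc pos_snoc)+
  qed simp
qed

lemma no_rrev_step: "\<not> rrev_step S R (pos a @ winv b) w'"
  using rrev_step_FT noFT[of "pos a" "winv b"] set_pos set_winv by metis

lemma no_lrev_step: "\<not> lrev_step S R (winv a @ pos b) w'"
  using lrev_step_TF noTF[of "winv a" "pos b"] set_pos set_winv by metis

lemma len2: "length xs = 2 \<Longrightarrow> \<exists>a b. xs = [a, b]"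
  by (cases xs; cases "tl xs") auto

lemma rrev_step_ss:
  assumes "condC S R" "s \<in> S" "rrev_step S R [(s, False), (s, True)] z"
  shows "\<exists>a. z = pos a @ winv a"
  using assms(3) unfolding rrev_step_def
proof (elim disjE exE conjE)
  fix w1 w2 u assume h: "u \<noteq> []" "[(s, False), (s, True)] = w1 @ winv u @ pos u @ w2" "z = w1 @ w2"
  then have "length [(s, False), (s, True)] = length w1 + 2 * length u + length w2" by simp
  with h(1) have "w1 = []" "w2 = []" by (cases u; simp)+
  then show ?thesis using h by (auto intro!: exI[of _ "[]"])
next
  fix w1 w2 u v u' v'
  assume h: "u \<in> lists S" "v \<in> lists S" "u' \<in> lists S" "v' \<in> lists S" "u \<noteq> []" "v \<noteq> []"
    "is_rel R (u @ v') (v @ u')" "[(s, False), (s, True)] = w1 @ winv u @ pos v @ w2"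
    "z = w1 @ pos v' @ winv u' @ w2"
  then have "length [(s, False), (s, True)] = length w1 + length u + length v + length w2" by simp
  with h(5,6) have l: "w1 = []" "w2 = []" "length u = 1" "length v = 1" by (cases u; cases v; simp)+
  then obtain a b where "u = [a]" "v = [b]" by (metis One_nat_def length_0_conv length_Suc_conv)
  with h(8) l have "u = [s]" "v = [s]" by (auto simp: winv_def)
  with h(7) have "is_rel R (s # v') (s # u')" by simp
  with assms(1,2) h(3,4) have "v' = u'" unfolding condC_def by blast
  then show ?thesis using h(9) l by auto
qed

lemma lrev_step_ss:
  assumes "condC S R" "s \<in> S" "lrev_step S R [(s, True), (s, False)] z"
  shows "\<exists>a. z = winv a @ pos a"
  using assms(3) unfolding lrev_step_def
proof (elim disjE exE conjE)
  fix w1 w2 u assume h: "u \<noteq> []" "[(s, True), (s, False)] = w1 @ pos u @ winv u @ w2" "z = w1 @ w2"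
  then have "length [(s, True), (s, False)] = length w1 + 2 * length u + length w2" by simp
  with h(1) have "w1 = []" "w2 = []" by (cases u; simp)+
  then show ?thesis using h by (auto intro!: exI[of _ "[]"])
next
  fix w1 w2 u v u' v'
  assume h: "u \<in> lists S" "v \<in> lists S" "u' \<in> lists S" "v' \<in> lists S" "u \<noteq> []" "v \<noteq> []"
    "is_rel R (v' @ u) (u' @ v)" "[(s, True), (s, False)] = w1 @ pos u @ winv v @ w2"
    "z = w1 @ winv v' @ pos u' @ w2"
  then have "length [(s, True), (s, False)] = length w1 + length u + length v + length w2" by simp
  with h(5,6) have l: "w1 = []" "w2 = []" "length u = 1" "length v = 1" by (cases u; cases v; simp)+
  then obtain a b where "u = [a]" "v = [b]" by (metis One_nat_def length_0_conv length_Suc_conv)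
  with h(8) l have "u = [s]" "v = [s]" by (auto simp: winv_def)
  with h(7) have "is_rel R (v' @ [s]) (u' @ [s])" by simp
  with assms(1,2) h(3,4) have "v' = u'" unfolding condC_def by blast
  then show ?thesis using h(9) l by auto
qed

lemma rrev_ss:
  assumes "condC S R" "s \<in> S" "rrev S R [(s, False), (s, True)] t"
  shows "t = [(s, False), (s, True)] \<or> (\<exists>a. t = pos a @ winv a)"
  using assms(3) unfolding rrev_def
proof (induction rule: rtranclp_induct)
  case base then show ?case by simp
next
  case (step y z) then show ?case
    using rrev_step_ss[OF assms(1,2)] no_rrev_step by metis
qed

lemma lrev_ss:
  assumes "condC S R" "s \<in> S" "lrev S R [(s, True), (s, False)] t"
  shows "t = [(s, True), (s, False)] \<or> (\<exists>a. t = winv a @ pos a)"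
  using assms(3) unfolding lrev_def
proof (induction rule: rtranclp_induct)
  case base then show ?case by simp
next
  case (step y z) then show ?case
    using lrev_step_ss[OF assms(1,2)] no_lrev_step by metis
qed

lemma lcancel1:
  assumes "complete S R" "condC S R" "s \<in> S" "u1 \<in> lists S" "v1 \<in> lists S"
    "pequiv R (s # u1) (s # v1)"
  shows "pequiv R u1 v1"
proof -
  have "r_complete S R" using assms(1) by (simp add: complete_def)
  then obtain u'' v'' w where h: "u'' \<in> lists S" "v'' \<in> lists S" "w \<in> lists S"
    "rrev S R (winv [s] @ pos [s]) (pos v'' @ winv u'')"
    "pequiv R v1 (u'' @ w)" "pequiv R u1 (v'' @ w)"
    unfolding r_complete_def using assms(3-6)
    by (metis append_Cons append_Nil lists.Cons lists.Nil)
  have "winv [s] @ pos [s] = [(s, False), (s, True)]" by (simp add: winv_def)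
  with h(4) have "pos v'' @ winv u'' = [(s, False), (s, True)] \<or> (\<exists>a. pos v'' @ winv u'' = pos a @ winv a)"
    using rrev_ss[OF assms(2,3)] by metis
  moreover have "pos v'' @ winv u'' \<noteq> [] @ (s, False) # (s, True) # []"
    using noFT set_pos set_winv by metis
  ultimately have "v'' = u''" using pos_winv_inj by fastforce
  then show ?thesis using h(5,6) by (meson pequiv_sym pequiv_trans)
qed

lemma rcancel1:
  assumes "complete S R" "condC S R" "s \<in> S" "u1 \<in> lists S" "v1 \<in> lists S"
    "pequiv R (u1 @ [s]) (v1 @ [s])"
  shows "pequiv R u1 v1"
proof -
  have "l_complete S R" using assms(1) by (simp add: complete_def)
  then obtain u'' v'' w where h: "u'' \<in> lists S" "v'' \<in> lists S" "w \<in> lists S"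
    "lrev S R (pos [s] @ winv [s]) (winv v'' @ pos u'')"
    "pequiv R v1 (w @ u'')" "pequiv R u1 (w @ v'')"
    unfolding l_complete_def using assms(3-6)
    by (metis lists.Cons lists.Nil)
  have "pos [s] @ winv [s] = [(s, True), (s, False)]" by (simp add: winv_def)
  with h(4) have "winv v'' @ pos u'' = [(s, True), (s, False)] \<or> (\<exists>a. winv v'' @ pos u'' = winv a @ pos a)"
    using lrev_ss[OF assms(2,3)] by metis
  moreover have "winv v'' @ pos u'' \<noteq> [] @ (s, True) # (s, False) # []"
    using noTF set_pos set_winv by metis
  ultimately have "v'' = u''" using winv_pos_inj by fastforce
  then show ?thesis using h(5,6) by (meson pequiv_sym pequiv_trans)
qed

lemma lcancel:
  assumes "complete S R" "condC S R" "a \<in> lists S" "b \<in> lists S" "c \<in> lists S"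
    "pequiv R (a @ b) (a @ c)"
  shows "pequiv R b c"
  using assms(3,6)
proof (induction a)
  case Nil then show ?case by simp
next
  case (Cons s a) then show ?case
    using lcancel1[OF assms(1,2), of s "a @ b" "a @ c"] assms(4,5) by auto
qed

lemma rcancel:
  assumes "complete S R" "condC S R" "a \<in> lists S" "b \<in> lists S" "c \<in> lists S"
    "pequiv R (b @ a) (c @ a)"
  shows "pequiv R b c"
  using assms(3,6)
proof (induction a rule: rev_induct)
  case Nil then show ?case by simp
next
  case (snoc s a) then show ?case
    using rcancel1[OF assms(1,2), of s "b @ a" "c @ a"] assms(4,5) by auto
qed

subsection \<open>Common right multiples\<close>

lemma ore_condEr:
  assumes "condEr S R" "a \<in> lists S" "b \<in> lists S"
  shows "\<exists>c \<in> lists S. \<exists>d \<in> lists S. pequiv R (a @ c) (b @ d)"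
proof -
  obtain T where T: "(\<lambda>s. [s]) ` S \<subseteq> T" "T \<subseteq> lists S"
    "\<And>u v. u \<in> T \<Longrightarrow> v \<in> T \<Longrightarrow> \<exists>u' \<in> T. \<exists>v' \<in> T. pequiv R (u @ v') (v @ u')"
    using assms(1) rrev_sound_empty unfolding condEr_def by metis
  have cl: "concat xs \<in> lists S" if "xs \<in> lists T" for xs
    using that T(2) by (induction xs) auto
  have A: "\<exists>u2 \<in> T. \<exists>cs \<in> lists T. pequiv R (u @ concat cs) (concat bs @ u2)"
    if "u \<in> T" "bs \<in> lists T" for u bs
    using that
  proof (induction bs arbitrary: u)
    case Nil
    have "pequiv R (u @ concat []) (concat [] @ u)" by simp
    then show ?case using Nil.prems by blast
  next
    case (Cons b bs)
    then obtain u' v' where uv: "u' \<in> T" "v' \<in> T" "pequiv R (u @ v') (b @ u')"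
      using T(3)[of u b] by auto
    then obtain u2 cs where c: "u2 \<in> T" "cs \<in> lists T" "pequiv R (u' @ concat cs) (concat bs @ u2)"
      using Cons.IH[of u'] Cons.prems by auto
    have "pequiv R (u @ v' @ concat cs) (b @ u' @ concat cs)"
      using pequiv_app_r[OF uv(3), of "concat cs"] by simp
    moreover have "pequiv R (b @ u' @ concat cs) (b @ concat bs @ u2)"
      using pequiv_app_l[OF c(3)] by simp
    ultimately have "pequiv R (u @ concat (v' # cs)) (concat (b # bs) @ u2)"
      by (auto intro: pequiv_trans)
    moreover have "v' # cs \<in> lists T" using uv c by simp
    ultimately show ?case using c(1) by blast
  qed
  have B: "\<exists>cs \<in> lists T. \<exists>ds \<in> lists T. pequiv R (concat as @ concat cs) (concat bs @ concat ds)"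
    if "as \<in> lists T" "bs \<in> lists T" for as bs
    using that
  proof (induction as arbitrary: bs)
    case Nil
    have "pequiv R (concat [] @ concat bs) (concat bs @ concat [])" by simp
    then show ?case using Nil.prems by blast
  next
    case (Cons a as)
    then obtain u2 cs1 where c1: "u2 \<in> T" "cs1 \<in> lists T" "pequiv R (a @ concat cs1) (concat bs @ u2)"
      using A[of a bs] Cons.prems by auto
    then obtain cs2 ds2 where c2: "cs2 \<in> lists T" "ds2 \<in> lists T"
      "pequiv R (concat as @ concat cs2) (concat cs1 @ concat ds2)"
      using Cons.IH[of cs1] Cons.prems by auto
    have "pequiv R (a @ concat as @ concat cs2) (a @ concat cs1 @ concat ds2)"
      using pequiv_app_l[OF c2(3)] by simp
    moreover have "pequiv R (a @ concat cs1 @ concat ds2) (concat bs @ u2 @ concat ds2)"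
      using pequiv_app_r[OF c1(3), of "concat ds2"] by simp
    ultimately have "pequiv R (concat (a # as) @ concat cs2) (concat bs @ concat (u2 # ds2))"
      by (auto intro: pequiv_trans)
    moreover have "u2 # ds2 \<in> lists T" using c1 c2 by simp
    ultimately show ?case using c2(1) by blast
  qed
  have sg: "map (\<lambda>s. [s]) x \<in> lists T" "concat (map (\<lambda>s. [s]) x) = x" if "x \<in> lists S" for x
    using that T(1) by (induction x) auto
  obtain cs ds where "cs \<in> lists T" "ds \<in> lists T"
    "pequiv R (a @ concat cs) (b @ concat ds)"
    using B[OF sg(1)[OF assms(2)] sg(1)[OF assms(3)]] sg(2) assms(2,3) by metis
  then show ?thesis using cl by blast
qed



lemma group_transport:
  assumes grp: "group H" and inj: "inj_on e (carrier H)"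
  defines "G \<equiv> \<lparr>carrier = e ` carrier H,
     mult = (\<lambda>a b. e (inv_into (carrier H) e a \<otimes>\<^bsub>H\<^esub> inv_into (carrier H) e b)),
     one = e \<one>\<^bsub>H\<^esub>\<rparr>"
  shows "group G"
    and "\<And>a b. a \<in> carrier H \<Longrightarrow> b \<in> carrier H \<Longrightarrow> e (a \<otimes>\<^bsub>H\<^esub> b) = e a \<otimes>\<^bsub>G\<^esub> e b"
    and "\<And>a. a \<in> carrier H \<Longrightarrow> inv\<^bsub>G\<^esub> (e a) = e (inv\<^bsub>H\<^esub> a)"
    and "\<one>\<^bsub>G\<^esub> = e \<one>\<^bsub>H\<^esub>"
    and "carrier G = e ` carrier H"
proof -
  interpret H: group H by (rule grp)
  have de[simp]: "inv_into (carrier H) e (e a) = a" if "a \<in> carrier H" for a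
    using inj that by (simp add: inv_into_f_f)
  show mul: "\<And>a b. a \<in> carrier H \<Longrightarrow> b \<in> carrier H \<Longrightarrow> e (a \<otimes>\<^bsub>H\<^esub> b) = e a \<otimes>\<^bsub>G\<^esub> e b"
    by (simp add: G_def)
  show gG: "group G"
  proof (rule groupI)
    fix x y assume "x \<in> carrier G" "y \<in> carrier G"
    then show "x \<otimes>\<^bsub>G\<^esub> y \<in> carrier G" by (auto simp: G_def)
  next
    show "\<one>\<^bsub>G\<^esub> \<in> carrier G" by (simp add: G_def)
  next
    fix x y z assume "x \<in> carrier G" "y \<in> carrier G" "z \<in> carrier G"
    then show "x \<otimes>\<^bsub>G\<^esub> y \<otimes>\<^bsub>G\<^esub> z = x \<otimes>\<^bsub>G\<^esub> (y \<otimes>\<^bsub>G\<^esub> z)"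
      by (auto simp: G_def H.m_assoc)
  next
    fix x assume "x \<in> carrier G"
    then show "\<one>\<^bsub>G\<^esub> \<otimes>\<^bsub>G\<^esub> x = x" by (auto simp: G_def)
  next
    fix x assume "x \<in> carrier G"
    then obtain a where a: "a \<in> carrier H" "x = e a" by (auto simp: G_def)
    then have "e (inv\<^bsub>H\<^esub> a) \<otimes>\<^bsub>G\<^esub> x = \<one>\<^bsub>G\<^esub>" by (simp add: G_def)
    moreover have "e (inv\<^bsub>H\<^esub> a) \<in> carrier G" using a by (simp add: G_def)
    ultimately show "\<exists>y\<in>carrier G. y \<otimes>\<^bsub>G\<^esub> x = \<one>\<^bsub>G\<^esub>" by blast
  qed
  show "\<And>a. a \<in> carrier H \<Longrightarrow> inv\<^bsub>G\<^esub> (e a) = e (inv\<^bsub>H\<^esub> a)"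
  proof -
    fix a assume a: "a \<in> carrier H"
    show "inv\<^bsub>G\<^esub> (e a) = e (inv\<^bsub>H\<^esub> a)"
      by (rule group.inv_equality[OF gG]) (use a in \<open>simp_all add: G_def\<close>)
  qed
  show "\<one>\<^bsub>G\<^esub> = e \<one>\<^bsub>H\<^esub>" "carrier G = e ` carrier H" by (simp_all add: G_def)
qed

lemma (in group) ore_swap:
  assumes "a \<in> carrier G" "b \<in> carrier G" "c \<in> carrier G" "d \<in> carrier G"
    "a \<otimes> c = b \<otimes> d"
  shows "inv a \<otimes> b = c \<otimes> inv d"
proof -
  have "inv a \<otimes> b \<otimes> d = inv a \<otimes> (b \<otimes> d)" using assms by (simp add: m_assoc)
  also have "\<dots> = inv a \<otimes> (a \<otimes> c)" using assms(5) by simp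
  also have "\<dots> = c" using assms(1,3) by (simp add: m_assoc[symmetric])
  finally have "inv a \<otimes> b \<otimes> d = c" .
  then have "inv a \<otimes> b \<otimes> d \<otimes> inv d = c \<otimes> inv d" by simp
  then show ?thesis using assms by (simp add: m_assoc)
qed

locale oremon =
  fixes L :: "'a list set" and E :: "'a list \<Rightarrow> 'a list \<Rightarrow> bool"
  assumes Nil_L[simp]: "[] \<in> L" and app_L[simp]: "x \<in> L \<Longrightarrow> y \<in> L \<Longrightarrow> x @ y \<in> L"
    and Erefl[simp]: "E x x" and Esym: "E x y \<Longrightarrow> E y x" and Etrans: "E x y \<Longrightarrow> E y z \<Longrightarrow> E x z"
    and cong_l: "E x y \<Longrightarrow> E (c @ x) (c @ y)" and cong_r: "E x y \<Longrightarrow> E (x @ d) (y @ d)"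
    and lcan: "a \<in> L \<Longrightarrow> b \<in> L \<Longrightarrow> c \<in> L \<Longrightarrow> E (a @ b) (a @ c) \<Longrightarrow> E b c"
    and rcan: "a \<in> L \<Longrightarrow> b \<in> L \<Longrightarrow> c \<in> L \<Longrightarrow> E (b @ a) (c @ a) \<Longrightarrow> E b c"
    and ore: "a \<in> L \<Longrightarrow> b \<in> L \<Longrightarrow> \<exists>c\<in>L. \<exists>d\<in>L. E (a @ c) (b @ d)"
begin

definition rel :: "(('a list \<times> 'a list) \<times> ('a list \<times> 'a list)) set" where
  "rel = {((x, y), (x', y')). x \<in> L \<and> y \<in> L \<and> x' \<in> L \<and> y' \<in> L \<and>
      (\<exists>z\<in>L. \<exists>z'\<in>L. E (x @ z) (x' @ z') \<and> E (y @ z) (y' @ z'))}"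

definition X where "X = (L \<times> L) // rel"

definition cls where "cls p = rel `` {p}"

lemma rel_iff: "((x, y), (x', y')) \<in> rel \<longleftrightarrow> x \<in> L \<and> y \<in> L \<and> x' \<in> L \<and> y' \<in> L \<and>
      (\<exists>z\<in>L. \<exists>z'\<in>L. E (x @ z) (x' @ z') \<and> E (y @ z) (y' @ z'))"
  by (simp add: rel_def)

lemma equiv_rel: "equiv (L \<times> L) rel"
proof (rule equivI)
  show "refl_on (L \<times> L) rel"
    by (rule refl_onI) (auto simp: rel_def intro!: bexI[of _ "[]"])
  show "sym rel"
    by (rule symI) (auto simp: rel_def intro: Esym)
  show "trans rel"
  proof (rule transI)
    fix p q r assume pq: "(p, q) \<in> rel" and qr: "(q, r) \<in> rel"
    obtain x y x' y' x'' y'' where [simp]: "p = (x, y)" "q = (x', y')" "r = (x'', y'')"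
      by (cases p; cases q; cases r) auto
    from pq obtain z z' where z: "z \<in> L" "z' \<in> L" "E (x @ z) (x' @ z')" "E (y @ z) (y' @ z')"
      and L1: "x \<in> L" "y \<in> L" "x' \<in> L" "y' \<in> L" by (auto simp: rel_def)
    from qr obtain t t' where t: "t \<in> L" "t' \<in> L" "E (x' @ t) (x'' @ t')" "E (y' @ t) (y'' @ t')"
      and L2: "x'' \<in> L" "y'' \<in> L" by (auto simp: rel_def)
    obtain c d where cd: "c \<in> L" "d \<in> L" "E (z' @ c) (t @ d)" using ore[OF z(2) t(1)] by blast
    have "E (x @ z @ c) (x'' @ t' @ d)"
    proof -
      have "E (x @ z @ c) (x' @ z' @ c)" using cong_r[OF z(3), of c] by simp
      moreover have "E (x' @ z' @ c) (x' @ t @ d)" using cong_l[OF cd(3)] by simp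
      moreover have "E (x' @ t @ d) (x'' @ t' @ d)" using cong_r[OF t(3), of d] by simp
      ultimately show ?thesis by (meson Etrans)
    qed
    moreover have "E (y @ z @ c) (y'' @ t' @ d)"
    proof -
      have "E (y @ z @ c) (y' @ z' @ c)" using cong_r[OF z(4), of c] by simp
      moreover have "E (y' @ z' @ c) (y' @ t @ d)" using cong_l[OF cd(3)] by simp
      moreover have "E (y' @ t @ d) (y'' @ t' @ d)" using cong_r[OF t(4), of d] by simp
      ultimately show ?thesis by (meson Etrans)
    qed
    moreover have "z @ c \<in> L" "t' @ d \<in> L" using z t cd by auto
    ultimately show "(p, r) \<in> rel" using L1 L2 unfolding rel_def by auto
  qed
  show "rel \<subseteq> (L \<times> L) \<times> (L \<times> L)" by (auto simp: rel_def)
qed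

lemma cls_eq_iff: "p \<in> L \<times> L \<Longrightarrow> q \<in> L \<times> L \<Longrightarrow> cls p = cls q \<longleftrightarrow> (p, q) \<in> rel"
  unfolding cls_def using equiv_class_eq_iff[OF equiv_rel] by blast

lemma cls_in_X: "p \<in> L \<times> L \<Longrightarrow> cls p \<in> X"
  unfolding cls_def X_def by (rule quotientI)

lemma X_cases: "A \<in> X \<Longrightarrow> (\<And>x y. A = cls (x, y) \<Longrightarrow> x \<in> L \<Longrightarrow> y \<in> L \<Longrightarrow> P) \<Longrightarrow> P"
  unfolding X_def cls_def by (erule quotientE) auto

lemma rel_E: "x \<in> L \<Longrightarrow> y \<in> L \<Longrightarrow> x' \<in> L \<Longrightarrow> y' \<in> L \<Longrightarrow> E x x' \<Longrightarrow> E y y' \<Longrightarrow> ((x, y), (x', y')) \<in> rel"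
  by (auto simp: rel_def intro!: bexI[of _ "[]"])

lemma rel_shift: "((x, y), (x', y')) \<in> rel \<Longrightarrow> m \<in> L \<Longrightarrow> ((m @ x, y), (m @ x', y')) \<in> rel"
  unfolding rel_def by (auto dest: cong_l[of _ _ m])

definition shift :: "'a list \<Rightarrow> ('a list \<times> 'a list) \<Rightarrow> ('a list \<times> 'a list)" where
  "shift m p = (m @ fst p, snd p)"

definition lam :: "'a list \<Rightarrow> ('a list \<times> 'a list) set \<Rightarrow> ('a list \<times> 'a list) set" where
  "lam m = (\<lambda>A\<in>X. rel `` (shift m ` A))"

lemma lam_cls: "m \<in> L \<Longrightarrow> x \<in> L \<Longrightarrow> y \<in> L \<Longrightarrow> lam m (cls (x, y)) = cls (m @ x, y)"
proof -
  assume L: "m \<in> L" "x \<in> L" "y \<in> L"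
  have "rel `` (shift m ` cls (x, y)) = cls (m @ x, y)"
  proof
    show "rel `` (shift m ` cls (x, y)) \<subseteq> cls (m @ x, y)"
    proof
      fix q assume "q \<in> rel `` (shift m ` cls (x, y))"
      then obtain p where p: "((x, y), p) \<in> rel" "(shift m p, q) \<in> rel"
        by (auto simp: cls_def)
      obtain x' y' where [simp]: "p = (x', y')" by (cases p)
      have "((m @ x, y), shift m p) \<in> rel" using rel_shift[OF p(1)[simplified] L(1)] by (simp add: shift_def)
      then show "q \<in> cls (m @ x, y)" using p(2) equiv_rel unfolding cls_def equiv_def trans_def by blast
    qed
  next
    have "(x, y) \<in> cls (x, y)" using rel_E[OF L(2,3,2,3) Erefl Erefl] unfolding cls_def by simp
    then have "(m @ x, y) \<in> shift m ` cls (x, y)" by (force simp: shift_def)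
    then show "cls (m @ x, y) \<subseteq> rel `` (shift m ` cls (x, y))" by (auto simp: cls_def)
  qed
  then show ?thesis using L by (simp add: lam_def cls_in_X)
qed

end



context oremon begin

lemma rel_unshift: "m \<in> L \<Longrightarrow> x \<in> L \<Longrightarrow> x' \<in> L \<Longrightarrow> ((m @ x, y), (m @ x', y')) \<in> rel \<Longrightarrow> ((x, y), (x', y')) \<in> rel"
  unfolding rel_iff using lcan by (metis app_L append_assoc)

lemma lam_Bij: "m \<in> L \<Longrightarrow> lam m \<in> Bij X"
proof -
  assume m: "m \<in> L"
  have ext: "lam m \<in> extensional X" by (simp add: lam_def)
  have inj: "inj_on (lam m) X"
  proof (rule inj_onI)
    fix A B assume A: "A \<in> X" and B: "B \<in> X" and eq: "lam m A = lam m B"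
    obtain x y where a: "A = cls (x, y)" "x \<in> L" "y \<in> L" using A by (rule X_cases)
    obtain x' y' where b: "B = cls (x', y')" "x' \<in> L" "y' \<in> L" using B by (rule X_cases)
    from eq have "cls (m @ x, y) = cls (m @ x', y')" using a b m by (simp add: lam_cls)
    then have "((m @ x, y), (m @ x', y')) \<in> rel" using a b m by (simp add: cls_eq_iff)
    then have "((x, y), (x', y')) \<in> rel" using rel_unshift m a b by blast
    then show "A = B" using a b by (simp add: cls_eq_iff)
  qed
  have img: "lam m ` X = X"
  proof
    show "lam m ` X \<subseteq> X"
    proof
      fix B assume "B \<in> lam m ` X"
      then obtain A where A: "A \<in> X" "B = lam m A" by blast
      obtain x y where a: "A = cls (x, y)" "x \<in> L" "y \<in> L" using A(1) by (rule X_cases)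
      show "B \<in> X" using A a m by (simp add: lam_cls cls_in_X)
    qed
  next
    show "X \<subseteq> lam m ` X"
    proof
      fix A assume A: "A \<in> X"
      obtain x y where a: "A = cls (x, y)" "x \<in> L" "y \<in> L" using A by (rule X_cases)
      obtain c d where cd: "c \<in> L" "d \<in> L" "E (m @ c) (x @ d)" using ore[OF m a(2)] by blast
      have "((m @ c, y @ d), (x, y)) \<in> rel"
        unfolding rel_iff using m a cd by (metis Nil_L app_L append_Nil2 Erefl)
      then have "lam m (cls (c, y @ d)) = A"
        using m a cd by (simp add: lam_cls cls_eq_iff)
      moreover have "cls (c, y @ d) \<in> X" using cd a by (simp add: cls_in_X)
      ultimately show "A \<in> lam m ` X" by blast
    qed
  qed
  show ?thesis using ext inj img by (simp add: Bij_def bij_betw_def)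
qed

abbreviation "B \<equiv> BijGroup X"

lemma B_group: "group B" by (rule group_BijGroup)

lemma lam_carrier: "m \<in> L \<Longrightarrow> lam m \<in> carrier B"
  by (simp add: BijGroup_def lam_Bij)

lemma lam_app: "a \<in> L \<Longrightarrow> b \<in> L \<Longrightarrow> lam (a @ b) = lam a \<otimes>\<^bsub>B\<^esub> lam b"
proof -
  assume ab: "a \<in> L" "b \<in> L"
  have "lam a \<otimes>\<^bsub>B\<^esub> lam b = compose X (lam a) (lam b)"
    using ab by (simp add: BijGroup_def lam_Bij)
  also have "\<dots> = lam (a @ b)"
  proof (rule extensionalityI[of _ X])
    show "compose X (lam a) (lam b) \<in> extensional X" by (simp add: compose_def)
    show "lam (a @ b) \<in> extensional X" by (simp add: lam_def)
    fix A assume A: "A \<in> X"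
    obtain x y where xy: "A = cls (x, y)" "x \<in> L" "y \<in> L" using A by (rule X_cases)
    show "compose X (lam a) (lam b) A = lam (a @ b) A"
      using A xy ab by (simp add: compose_def lam_cls)
  qed
  finally show ?thesis by simp
qed

lemma lam_Nil: "lam [] = \<one>\<^bsub>B\<^esub>"
proof (rule extensionalityI[of _ X])
  show "lam [] \<in> extensional X" by (simp add: lam_def)
  show "\<one>\<^bsub>B\<^esub> \<in> extensional X" by (simp add: BijGroup_def)
  fix A assume A: "A \<in> X"
  obtain x y where xy: "A = cls (x, y)" "x \<in> L" "y \<in> L" using A by (rule X_cases)
  show "lam [] A = \<one>\<^bsub>B\<^esub> A" using A xy by (simp add: lam_cls BijGroup_def)
qed

definition base where "base = cls ([], [])"

lemma base_X: "base \<in> X" by (simp add: base_def cls_in_X)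

lemma lam_eq_iff: "u \<in> L \<Longrightarrow> v \<in> L \<Longrightarrow> lam u = lam v \<longleftrightarrow> E u v"
proof
  assume uv: "u \<in> L" "v \<in> L" "lam u = lam v"
  then have "cls (u, []) = cls (v, [])" using lam_cls[of u "[]" "[]"] lam_cls[of v "[]" "[]"] by simp
  then have "((u, []), (v, [])) \<in> rel" using uv by (simp add: cls_eq_iff)
  then obtain z z' where z: "z \<in> L" "z' \<in> L" "E (u @ z) (v @ z')" "E z z'" by (auto simp: rel_iff)
  then have "E (u @ z) (v @ z)" using cong_l[OF Esym[OF z(4)], of v] Etrans by blast
  then show "E u v" using rcan uv z by blast
next
  assume uv: "u \<in> L" "v \<in> L" "E u v"
  show "lam u = lam v"
  proof (rule extensionalityI[of _ X])
    show "lam u \<in> extensional X" "lam v \<in> extensional X" by (simp_all add: lam_def)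
    fix A assume A: "A \<in> X"
    obtain x y where xy: "A = cls (x, y)" "x \<in> L" "y \<in> L" using A by (rule X_cases)
    have "((u @ x, y), (v @ x, y)) \<in> rel" using rel_E cong_r[OF uv(3)] uv xy by simp
    then show "lam u A = lam v A" using xy uv by (simp add: lam_cls cls_eq_iff)
  qed
qed

lemma inv_lam_base: "y \<in> L \<Longrightarrow> (inv\<^bsub>B\<^esub> (lam y)) base = cls ([], y)"
proof -
  assume y: "y \<in> L"
  have "((y, y), ([], [])) \<in> rel" unfolding rel_iff using y
    by (metis Nil_L append_Nil append_Nil2 Erefl)
  then have "lam y (cls ([], y)) = base" using y by (simp add: lam_cls base_def cls_eq_iff)
  moreover have "inj_on (lam y) X" using lam_Bij[OF y] by (simp add: Bij_def bij_betw_def)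
  moreover have "cls ([], y) \<in> X" using y by (simp add: cls_in_X)
  ultimately have "inv_into X (lam y) base = cls ([], y)" by (metis inv_into_f_f)
  then show ?thesis using lam_Bij[OF y] base_X by (simp add: inv_BijGroup)
qed

definition G0 where "G0 = {lam x \<otimes>\<^bsub>B\<^esub> inv\<^bsub>B\<^esub> (lam y) | x y. x \<in> L \<and> y \<in> L}"

lemma G0I: "x \<in> L \<Longrightarrow> y \<in> L \<Longrightarrow> lam x \<otimes>\<^bsub>B\<^esub> inv\<^bsub>B\<^esub> (lam y) \<in> G0"
  unfolding G0_def by (rule CollectI, rule exI[of _ x], rule exI[of _ y]) simp

lemma G0E: "g \<in> G0 \<Longrightarrow> (\<And>x y. x \<in> L \<Longrightarrow> y \<in> L \<Longrightarrow> g = lam x \<otimes>\<^bsub>B\<^esub> inv\<^bsub>B\<^esub> (lam y) \<Longrightarrow> P) \<Longrightarrow> P"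
proof -
  assume g: "g \<in> G0" and H: "\<And>x y. x \<in> L \<Longrightarrow> y \<in> L \<Longrightarrow> g = lam x \<otimes>\<^bsub>B\<^esub> inv\<^bsub>B\<^esub> (lam y) \<Longrightarrow> P"
  from g obtain x y where "g = lam x \<otimes>\<^bsub>B\<^esub> inv\<^bsub>B\<^esub> (lam y)" "x \<in> L" "y \<in> L"
    unfolding G0_def by (elim CollectE exE conjE)
  then show P using H by blast
qed

lemma G0_sub: "subgroup G0 B"
proof -
  interpret B: group B by (rule B_group)
  show ?thesis
  proof (rule B.subgroupI)
    show "G0 \<subseteq> carrier B"
    proof
      fix g assume "g \<in> G0"
      then show "g \<in> carrier B" by (rule G0E) (simp add: lam_carrier)
    qed
    show "G0 \<noteq> {}" using G0I[OF Nil_L Nil_L] by blast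
  next
    fix a assume "a \<in> G0"
    then obtain x y where xy: "x \<in> L" "y \<in> L" "a = lam x \<otimes>\<^bsub>B\<^esub> inv\<^bsub>B\<^esub> (lam y)" by (rule G0E)
    then have "inv\<^bsub>B\<^esub> a = lam y \<otimes>\<^bsub>B\<^esub> inv\<^bsub>B\<^esub> (lam x)"
      by (simp add: B.inv_mult_group lam_carrier)
    then show "inv\<^bsub>B\<^esub> a \<in> G0" using G0I[OF xy(2,1)] by simp
  next
    fix a b assume ab: "a \<in> G0" "b \<in> G0"
    obtain x y where xy: "x \<in> L" "y \<in> L" "a = lam x \<otimes>\<^bsub>B\<^esub> inv\<^bsub>B\<^esub> (lam y)" using ab(1) by (rule G0E)
    obtain x' y' where xy': "x' \<in> L" "y' \<in> L" "b = lam x' \<otimes>\<^bsub>B\<^esub> inv\<^bsub>B\<^esub> (lam y')" using ab(2) by (rule G0E)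
    obtain c d where cd: "c \<in> L" "d \<in> L" "E (y @ c) (x' @ d)" using ore[OF xy(2) xy'(1)] by blast
    have "lam y \<otimes>\<^bsub>B\<^esub> lam c = lam x' \<otimes>\<^bsub>B\<^esub> lam d"
      using cd xy xy' lam_eq_iff[of "y @ c" "x' @ d"] by (simp add: lam_app[symmetric])
    then have sw: "inv\<^bsub>B\<^esub> (lam y) \<otimes>\<^bsub>B\<^esub> lam x' = lam c \<otimes>\<^bsub>B\<^esub> inv\<^bsub>B\<^esub> (lam d)"
      using cd xy xy' by (intro B.ore_swap) (simp_all add: lam_carrier)
    have "a \<otimes>\<^bsub>B\<^esub> b = lam x \<otimes>\<^bsub>B\<^esub> (inv\<^bsub>B\<^esub> (lam y) \<otimes>\<^bsub>B\<^esub> lam x') \<otimes>\<^bsub>B\<^esub> inv\<^bsub>B\<^esub> (lam y')"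
      using xy xy' by (simp add: B.m_assoc lam_carrier)
    also have "\<dots> = (lam x \<otimes>\<^bsub>B\<^esub> lam c) \<otimes>\<^bsub>B\<^esub> inv\<^bsub>B\<^esub> (lam y' \<otimes>\<^bsub>B\<^esub> lam d)"
      using xy xy' cd by (simp add: sw B.m_assoc lam_carrier B.inv_mult_group)
    also have "\<dots> = lam (x @ c) \<otimes>\<^bsub>B\<^esub> inv\<^bsub>B\<^esub> (lam (y' @ d))"
      using xy xy' cd by (simp add: lam_app)
    finally show "a \<otimes>\<^bsub>B\<^esub> b \<in> G0" using G0I[of "x @ c" "y' @ d"] xy xy' cd by simp
  qed
qed

end



context oremon begin

lemma B_mult_apply: "f \<in> Bij X \<Longrightarrow> g \<in> Bij X \<Longrightarrow> A \<in> X \<Longrightarrow> (f \<otimes>\<^bsub>B\<^esub> g) A = f (g A)"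
  by (simp add: BijGroup_def compose_def)

lemma B_inv_apply: "f \<in> Bij X \<Longrightarrow> A \<in> X \<Longrightarrow> (inv\<^bsub>B\<^esub> f) A = inv_into X f A"
  by (simp add: inv_BijGroup)

lemma carrier_B: "carrier B = Bij X" by (simp add: BijGroup_def)

lemma G0_fix_base: "k \<in> G0 \<Longrightarrow> k base = base \<Longrightarrow> k = \<one>\<^bsub>B\<^esub>"
proof -
  interpret B: group B by (rule B_group)
  assume k: "k \<in> G0" "k base = base"
  obtain x y where xy: "x \<in> L" "y \<in> L" "k = lam x \<otimes>\<^bsub>B\<^esub> inv\<^bsub>B\<^esub> (lam y)" using k(1) by (rule G0E)
  have "inv\<^bsub>B\<^esub> (lam y) \<in> Bij X" using B.inv_closed[OF lam_carrier[OF xy(2)]] by (simp add: carrier_B)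
  then have "k base = lam x ((inv\<^bsub>B\<^esub> (lam y)) base)"
    using xy lam_Bij base_X by (simp add: B_mult_apply)
  also have "\<dots> = cls (x, y)" using xy by (simp add: inv_lam_base lam_cls)
  finally have "cls (x, y) = cls ([], [])" using k(2) by (simp add: base_def)
  then have "((x, y), ([], [])) \<in> rel" using xy by (simp add: cls_eq_iff)
  then obtain z z' where z: "z \<in> L" "z' \<in> L" "E (x @ z) z'" "E (y @ z) z'" by (auto simp: rel_iff)
  then have "E (x @ z) (y @ z)" by (meson Esym Etrans)
  then have "E x y" using rcan xy z by blast
  then have "lam x = lam y" using xy lam_eq_iff by blast
  then show ?thesis using xy by (simp add: lam_carrier)
qed

lemma inj_enc: "inj_on (\<lambda>g. g base) G0"
proof (rule inj_onI)
  interpret B: group B by (rule B_group)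
  have sg: "subgroup G0 B" by (rule G0_sub)
  fix g h assume g: "g \<in> G0" and h: "h \<in> G0" and eq: "g base = h base"
  have gB: "g \<in> carrier B" "h \<in> carrier B" using g h sg by (auto dest: subgroup.mem_carrier)
  have kG: "inv\<^bsub>B\<^esub> h \<otimes>\<^bsub>B\<^esub> g \<in> G0" using g h sg by (simp add: subgroup.m_closed subgroup.m_inv_closed)
  have "(inv\<^bsub>B\<^esub> h \<otimes>\<^bsub>B\<^esub> g) base = inv_into X h (h base)"
  proof -
    have "inv\<^bsub>B\<^esub> h \<in> Bij X" using B.inv_closed[OF gB(2)] by (simp add: carrier_B)
    moreover have "g base \<in> X" using gB(1) base_X by (auto simp: carrier_B dest: Bij_imp_funcset)
    ultimately show ?thesis using gB base_X eq by (simp add: B_mult_apply carrier_B B_inv_apply)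
  qed
  also have "\<dots> = base" using gB(2) base_X by (simp add: carrier_B Bij_def bij_betw_def inv_into_f_f)
  finally have "inv\<^bsub>B\<^esub> h \<otimes>\<^bsub>B\<^esub> g = \<one>\<^bsub>B\<^esub>" using G0_fix_base kG by blast
  then have "h \<otimes>\<^bsub>B\<^esub> (inv\<^bsub>B\<^esub> h \<otimes>\<^bsub>B\<^esub> g) = h" using gB by simp
  then show "g = h" using gB by (simp add: B.m_assoc[symmetric])
qed

lemma lam_G0: "u \<in> L \<Longrightarrow> lam u \<in> G0"
proof -
  interpret B: group B by (rule B_group)
  assume u: "u \<in> L"
  have "lam u \<otimes>\<^bsub>B\<^esub> inv\<^bsub>B\<^esub> (lam []) = lam u" using u by (simp add: lam_Nil lam_carrier)
  then show ?thesis using G0I[OF u Nil_L] by simp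
qed

lemma embed:
  "\<exists>(G :: ('a list \<times> 'a list) set monoid) f. group G \<and>
       (\<forall>u \<in> L. f u \<in> carrier G) \<and>
       f [] = \<one>\<^bsub>G\<^esub> \<and>
       (\<forall>u \<in> L. \<forall>v \<in> L. f (u @ v) = f u \<otimes>\<^bsub>G\<^esub> f v) \<and>
       (\<forall>u \<in> L. \<forall>v \<in> L. f u = f v \<longleftrightarrow> E u v) \<and>
       (\<forall>g \<in> carrier G. \<exists>x \<in> L. \<exists>y \<in> L. g = f x \<otimes>\<^bsub>G\<^esub> inv\<^bsub>G\<^esub> (f y))"
proof -
  interpret B: group B by (rule B_group)
  have sg: "subgroup G0 B" by (rule G0_sub)
  define H where "H = B\<lparr>carrier := G0\<rparr>"
  have gH: "group H" unfolding H_def by (rule subgroup.subgroup_is_group[OF sg B_group])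
  have cH: "carrier H = G0" by (simp add: H_def)
  define e where "e = (\<lambda>g :: ('a list \<times> 'a list) set \<Rightarrow> ('a list \<times> 'a list) set. g base)"
  have inj: "inj_on e (carrier H)" using inj_enc by (simp add: cH e_def)
  define G where "G = \<lparr>carrier = e ` carrier H,
     mult = (\<lambda>a b. e (inv_into (carrier H) e a \<otimes>\<^bsub>H\<^esub> inv_into (carrier H) e b)),
     one = e \<one>\<^bsub>H\<^esub>\<rparr>"
  note T = group_transport[OF gH inj, folded G_def]
  define f where "f = (\<lambda>u. e (lam u))"
  have "group G" by (rule T(1))
  moreover have "\<forall>u \<in> L. f u \<in> carrier G" by (simp add: f_def T(5) cH lam_G0)
  moreover have "f [] = \<one>\<^bsub>G\<^esub>" by (simp add: f_def T(4) H_def lam_Nil)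
  moreover have "\<forall>u \<in> L. \<forall>v \<in> L. f (u @ v) = f u \<otimes>\<^bsub>G\<^esub> f v"
  proof (intro ballI)
    fix u v assume uv: "u \<in> L" "v \<in> L"
    have "f (u @ v) = e (lam u \<otimes>\<^bsub>H\<^esub> lam v)" by (simp add: f_def H_def lam_app uv)
    also have "\<dots> = f u \<otimes>\<^bsub>G\<^esub> f v" using T(2)[of "lam u" "lam v"] uv by (simp add: cH lam_G0 f_def)
    finally show "f (u @ v) = f u \<otimes>\<^bsub>G\<^esub> f v" .
  qed
  moreover have "\<forall>u \<in> L. \<forall>v \<in> L. f u = f v \<longleftrightarrow> E u v"
  proof (intro ballI)
    fix u v assume uv: "u \<in> L" "v \<in> L"
    have "f u = f v \<Longrightarrow> lam u = lam v"
      using inj_onD[OF inj, of "lam u" "lam v"] uv by (simp add: f_def cH lam_G0)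
    then have "f u = f v \<longleftrightarrow> lam u = lam v" by (auto simp: f_def)
    then show "f u = f v \<longleftrightarrow> E u v" using lam_eq_iff uv by simp
  qed
  moreover have "\<forall>g \<in> carrier G. \<exists>x \<in> L. \<exists>y \<in> L. g = f x \<otimes>\<^bsub>G\<^esub> inv\<^bsub>G\<^esub> (f y)"
  proof
    fix g assume "g \<in> carrier G"
    then obtain k where k: "k \<in> G0" "g = e k" by (auto simp: T(5) cH)
    obtain x y where xy: "x \<in> L" "y \<in> L" "k = lam x \<otimes>\<^bsub>B\<^esub> inv\<^bsub>B\<^esub> (lam y)" using k(1) by (rule G0E)
    have invH: "inv\<^bsub>H\<^esub> (lam y) = inv\<^bsub>B\<^esub> (lam y)" unfolding H_def using sg lam_G0[OF xy(2)] by simp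
    have "k = lam x \<otimes>\<^bsub>H\<^esub> inv\<^bsub>H\<^esub> (lam y)" using xy invH by (simp add: H_def)
    moreover have "inv\<^bsub>H\<^esub> (lam y) \<in> carrier H" using group.inv_closed[OF gH, of "lam y"] lam_G0[OF xy(2)] cH by simp
    ultimately have "e k = e (lam x) \<otimes>\<^bsub>G\<^esub> e (inv\<^bsub>H\<^esub> (lam y))"
      using T(2) xy lam_G0 cH by simp
    also have "\<dots> = f x \<otimes>\<^bsub>G\<^esub> inv\<^bsub>G\<^esub> (f y)" using T(3)[of "lam y"] xy lam_G0 cH by (simp add: f_def)
    finally show "\<exists>x \<in> L. \<exists>y \<in> L. g = f x \<otimes>\<^bsub>G\<^esub> inv\<^bsub>G\<^esub> (f y)" using xy k by blast
  qed
  ultimately show ?thesis by (intro exI[of _ G] exI[of _ f] conjI)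
qed

end


theorem proposition7p1:
  fixes S :: "'a set" and R :: "('a list \<times> 'a list) set"
  assumes "positive_presentation S R"
    and "complete S R"
    and "condC S R"
    and "condEr S R"
  shows "embeds_in_group_of_fractions S R"
proof -
  interpret O: oremon "lists S" "pequiv R"
  proof
    show "[] \<in> lists S" by simp
    show "\<And>x y. x \<in> lists S \<Longrightarrow> y \<in> lists S \<Longrightarrow> x @ y \<in> lists S" by simp
    show "\<And>x. pequiv R x x" by simp
    show "\<And>x y. pequiv R x y \<Longrightarrow> pequiv R y x" by (rule pequiv_sym)
    show "\<And>x y z. pequiv R x y \<Longrightarrow> pequiv R y z \<Longrightarrow> pequiv R x z" by (rule pequiv_trans)
    show "\<And>x y c. pequiv R x y \<Longrightarrow> pequiv R (c @ x) (c @ y)" by (rule pequiv_app_l)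
    show "\<And>x y d. pequiv R x y \<Longrightarrow> pequiv R (x @ d) (y @ d)" by (rule pequiv_app_r)
    show "\<And>a b c. a \<in> lists S \<Longrightarrow> b \<in> lists S \<Longrightarrow> c \<in> lists S \<Longrightarrow> pequiv R (a @ b) (a @ c) \<Longrightarrow> pequiv R b c"
      by (rule lcancel[OF assms(2,3)])
    show "\<And>a b c. a \<in> lists S \<Longrightarrow> b \<in> lists S \<Longrightarrow> c \<in> lists S \<Longrightarrow> pequiv R (b @ a) (c @ a) \<Longrightarrow> pequiv R b c"
      by (rule rcancel[OF assms(2,3)])
    show "\<And>a b. a \<in> lists S \<Longrightarrow> b \<in> lists S \<Longrightarrow> \<exists>c\<in>lists S. \<exists>d\<in>lists S. pequiv R (a @ c) (b @ d)"
      by (rule ore_condEr[OF assms(4)])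
  qed
  show ?thesis unfolding embeds_in_group_of_fractions_def by (rule O.embed)
qed

end
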